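(* Let $\mathcal P$ be a homogeneous Poisson point process on $[0,1]\times\mathbb R_+$ with intensity $\mathrm dt\,\mathrm dx$, and let $q:\mathbb N\to\mathbb R_+$ be nondecreasing with $q(1)<q(\infty):=\sup_r q(r)$. If there are constants $c>0$ and $0<\beta<1$ such that $q(r)<c\exp(r^\beta)$ for all $r\in\mathbb N$, then $V(\mathcal M)<\infty$.
   Context: Label the atoms of $\mathcal P$ as $(T_r,X_{1,r})$, $r=1,2,\dots$, with $X_{1,1}<X_{1,2}<\cdots$; the atom $(T_r,X_{1,r})$ has value $X_{1,r}$, arrival time $T_r$ and final rank $r$. For $t\in\{T_r\}$ let $X_t,R_t$ be the value and final rank of the atom arriving at time $t$, and $X_t=R_t=\infty$ otherwise. Let $\mathbf X_t$ be the increasing sequence of values of atoms arrived by time $t$. A stopping rule is a random variable $\tau$ with values in $\{T_r\}\cup\{1\}$ such that $\{\tau\le t\}\in\sigma(\mathbf X_s,s\le t)$ for all $t$; its risk is $\mathbb E[q(R_\tau)]=\sum_r q(r)\mathbb P(\tau=T_r)+q(\infty)\mathbb P(\tau=1)$. A memoryless rule is a stopping rule $\tau=\inf\{t:X_t\le f(t)\}$ ($\inf\varnothing=1$) with $f:[0,1[\,\to\mathbb R$ nondecreasing. $V(\mathcal M)$ is the infimum of the risk over all memoryless rules. *)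

theory Defs
  imports "HOL-Probability.Probability"
begin

text \<open>Atoms of the point process are (T r, X r) for r \<ge> 1, labelled so that
  X 1 < X 2 < ... (r is the final rank). Number of atoms in a set A:\<close>
definition pp_count ::
  "(nat \<Rightarrow> 'a \<Rightarrow> real) \<Rightarrow> (nat \<Rightarrow> 'a \<Rightarrow> real) \<Rightarrow> (real \<times> real) set \<Rightarrow> 'a \<Rightarrow> nat" where
  "pp_count T X A \<omega> = card {r. 1 \<le> r \<and> (T r \<omega>, X r \<omega>) \<in> A}"

definition poisson_pp ::
  "'a measure \<Rightarrow> (nat \<Rightarrow> 'a \<Rightarrow> real) \<Rightarrow> (nat \<Rightarrow> 'a \<Rightarrow> real) \<Rightarrow> bool" where
  "poisson_pp M T X \<longleftrightarrow>
     prob_space M \<and>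
     (\<forall>r\<ge>1. T r \<in> borel_measurable M \<and> X r \<in> borel_measurable M) \<and>
     (\<forall>\<omega>\<in>space M. \<forall>r\<ge>1. 0 \<le> T r \<omega> \<and> T r \<omega> \<le> 1 \<and> 0 \<le> X r \<omega> \<and> X r \<omega> < X (Suc r) \<omega>) \<and>
     (\<forall>A \<in> sets (lborel :: (real \<times> real) measure).
        A \<subseteq> {0..1} \<times> {0..} \<longrightarrow> emeasure lborel A < \<infinity> \<longrightarrow>
        (\<forall>k::nat. measure M {\<omega> \<in> space M. finite {r. 1 \<le> r \<and> (T r \<omega>, X r \<omega>) \<in> A}
                                      \<and> pp_count T X A \<omega> = k}
                 = exp (- measure lborel A) * measure lborel A ^ k / fact k)) \<and>
     (\<forall>(I::nat set) (A :: nat \<Rightarrow> (real \<times> real) set). finite I \<longrightarrow>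
        (\<forall>i\<in>I. A i \<in> sets lborel \<and> A i \<subseteq> {0..1} \<times> {0..} \<and> emeasure lborel (A i) < \<infinity>) \<longrightarrow>
        disjoint_family_on A I \<longrightarrow>
        prob_space.indep_vars M (\<lambda>_. count_space UNIV) (\<lambda>i. pp_count T X (A i)) I)"

definition memoryless_tau ::
  "(real \<Rightarrow> real) \<Rightarrow> (nat \<Rightarrow> 'a \<Rightarrow> real) \<Rightarrow> (nat \<Rightarrow> 'a \<Rightarrow> real) \<Rightarrow> 'a \<Rightarrow> real" where
  "memoryless_tau f T X \<omega> =
     (let S = {T r \<omega> | r. 1 \<le> r \<and> T r \<omega> < 1 \<and> X r \<omega> \<le> f (T r \<omega>)}
      in if S = {} then 1 else Inf S)"

definition q_infty :: "(nat \<Rightarrow> real) \<Rightarrow> ennreal" where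
  "q_infty q = (SUP r\<in>{1..}. ennreal (q r))"

text \<open>Risk E[q(R_tau)] = sum_r q(r) P(tau = T_r) + q(\<infinity>) P(tau = 1).\<close>
definition risk ::
  "'a measure \<Rightarrow> (nat \<Rightarrow> 'a \<Rightarrow> real) \<Rightarrow> (nat \<Rightarrow> 'a \<Rightarrow> real) \<Rightarrow> (nat \<Rightarrow> real) \<Rightarrow> ('a \<Rightarrow> real) \<Rightarrow> ennreal" where
  "risk M T X q \<tau> =
     (\<Sum>r. ennreal (q (Suc r)) * emeasure M {\<omega> \<in> space M. \<tau> \<omega> = T (Suc r) \<omega>})
     + q_infty q * emeasure M {\<omega> \<in> space M. \<tau> \<omega> = 1}"

definition V_memoryless ::
  "'a measure \<Rightarrow> (nat \<Rightarrow> 'a \<Rightarrow> real) \<Rightarrow> (nat \<Rightarrow> 'a \<Rightarrow> real) \<Rightarrow> (nat \<Rightarrow> real) \<Rightarrow> ennreal" where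
  "V_memoryless M T X q =
     (INF f \<in> {f :: real \<Rightarrow> real. mono_on {0..<1} f}. risk M T X q (memoryless_tau f T X))"

end

theory Submission
  imports Defs
begin


definition pois :: "real \<Rightarrow> nat \<Rightarrow> real" where
  "pois l k = exp (- l) * l ^ k / fact k"

lemma pois_nonneg: "0 \<le> l \<Longrightarrow> 0 \<le> pois l k"
  by (simp add: pois_def)

lemma pois_sums: "pois l sums 1"
proof -
  have "(\<lambda>k. l ^ k / fact k) sums exp l" using exp_converges[of l] by (simp add: divide_inverse mult.commute)
  then have "(\<lambda>k. exp (-l) * (l ^ k / fact k)) sums (exp (-l) * exp l)" by (rule sums_mult)
  moreover have "pois l = (\<lambda>k. exp (-l) * (l ^ k / fact k))" by (auto simp: pois_def)
  moreover have "exp (-l) * exp l = 1" by (simp add: exp_minus_inverse mult.commute)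
  ultimately show ?thesis by simp
qed

definition adm :: "(real \<times> real) set \<Rightarrow> bool" where
  "adm A \<longleftrightarrow> A \<in> sets lborel \<and> A \<subseteq> {0..1} \<times> {0..} \<and> emeasure lborel A < \<infinity>"

locale ppx =
  fixes M :: "'a measure" and T X :: "nat \<Rightarrow> 'a \<Rightarrow> real"
  assumes pp: "poisson_pp M T X"
begin

sublocale prob_space M using pp unfolding poisson_pp_def by blast

definition idx :: "(real \<times> real) set \<Rightarrow> 'a \<Rightarrow> nat set" where
  "idx A \<omega> = {r. 1 \<le> r \<and> (T r \<omega>, X r \<omega>) \<in> A}"

abbreviation NN where "NN A \<equiv> pp_count T X A"

lemma NN_eq: "NN A \<omega> = card (idx A \<omega>)"
  by (simp add: pp_count_def idx_def)

definition F where "F A k = {\<omega>\<in>space M. finite (idx A \<omega>) \<and> NN A \<omega> = k}"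

lemma TX_meas: "1 \<le> r \<Longrightarrow> T r \<in> borel_measurable M" "1 \<le> r \<Longrightarrow> X r \<in> borel_measurable M"
  using pp unfolding poisson_pp_def by auto

lemma TX_bounds: assumes "\<omega> \<in> space M" "1 \<le> r"
  shows "0 \<le> T r \<omega>" "T r \<omega> \<le> 1" "0 \<le> X r \<omega>" "X r \<omega> < X (Suc r) \<omega>"
  using pp assms unfolding poisson_pp_def by auto

lemma X_mono: assumes "\<omega> \<in> space M" "1 \<le> i" "i \<le> r" shows "X i \<omega> \<le> X r \<omega>"
  using assms(3,2)
proof (induction r rule: dec_induct)
  case base then show ?case by simp
next
  case (step r) then show ?case using TX_bounds(4)[OF assms(1), of r] assms(2) by auto
qed

lemma prob_F: "adm A \<Longrightarrow> prob (F A k) = pois (measure lborel A) k"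
  using pp unfolding poisson_pp_def adm_def F_def pois_def idx_def pp_count_def by auto

lemma NN_meas: assumes "adm A" shows "NN A \<in> measurable M (count_space UNIV)"
proof -
  have "indep_vars (\<lambda>_. count_space UNIV) (\<lambda>i. NN ((\<lambda>_. A) i)) {0::nat}"
    using pp assms unfolding poisson_pp_def adm_def by (auto simp: disjoint_family_on_def)
  then show ?thesis unfolding indep_vars_def by auto
qed

lemma pois_pos: "0 \<le> l \<Longrightarrow> (l > 0 \<or> k = 0) \<Longrightarrow> pois l k > 0"
  by (auto simp: pois_def)

lemma F_sets: assumes "adm A" shows "F A k \<in> events"
proof (cases "k = 0")
  case True
  have "0 \<le> measure lborel A" by simp
  then have "prob (F A k) > 0" using prob_F[OF assms] pois_pos True by auto
  then show ?thesis by (metis measure_notin_sets less_irrefl)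
next
  case False
  then have "F A k = NN A -` {k} \<inter> space M" unfolding F_def by (auto simp: NN_eq intro: card_ge_0_finite)
  then show ?thesis using measurable_sets[OF NN_meas[OF assms], of "{k}"] by simp
qed

lemma fin_AE: assumes "adm A" shows "AE \<omega> in M. finite (idx A \<omega>)"
proof -
  have r: "range (F A) \<subseteq> events" using F_sets[OF assms] by auto
  have d: "disjoint_family (F A)" unfolding disjoint_family_on_def F_def by auto
  have "(\<lambda>k. prob (F A k)) sums prob (\<Union>k. F A k)" by (rule finite_measure_UNION[OF r d])
  then have "pois (measure lborel A) sums prob (\<Union>k. F A k)" using prob_F[OF assms] by simp
  then have "prob (\<Union>k. F A k) = 1" using pois_sums sums_unique2 by blast
  then have "AE \<omega> in M. \<omega> \<in> (\<Union>k. F A k)" by (rule AE_prob_1)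
  then show ?thesis by eventually_elim (auto simp: F_def)
qed

lemma prob_NN: assumes "adm A"
  shows "prob (NN A -` {k} \<inter> space M) = pois (measure lborel A) k"
proof -
  have "prob (NN A -` {k} \<inter> space M) = prob (F A k)"
  proof (rule measure_eq_AE)
    show "AE x in M. (x \<in> NN A -` {k} \<inter> space M) = (x \<in> F A k)"
      using fin_AE[OF assms] by eventually_elim (auto simp: F_def)
    show "NN A -` {k} \<inter> space M \<in> events" using measurable_sets[OF NN_meas[OF assms], of "{k}"] by simp
    show "F A k \<in> events" by (rule F_sets[OF assms])
  qed
  then show ?thesis using prob_F[OF assms] by simp
qed

lemma indep_pp: "finite (I::nat set) \<Longrightarrow> (\<forall>i\<in>I. adm (A i)) \<Longrightarrow> disjoint_family_on A I \<Longrightarrow>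
   indep_vars (\<lambda>_. count_space UNIV) (\<lambda>i. NN (A i)) I"
proof -
  have H: "\<forall>(I::nat set) (A :: nat \<Rightarrow> (real \<times> real) set). finite I \<longrightarrow>
        (\<forall>i\<in>I. A i \<in> sets lborel \<and> A i \<subseteq> {0..1} \<times> {0..} \<and> emeasure lborel (A i) < \<infinity>) \<longrightarrow>
        disjoint_family_on A I \<longrightarrow>
        indep_vars (\<lambda>_. count_space UNIV) (\<lambda>i. pp_count T X (A i)) I"
    by (rule pp[unfolded poisson_pp_def, THEN conjunct2, THEN conjunct2, THEN conjunct2, THEN conjunct2])
  assume "finite I" "\<forall>i\<in>I. adm (A i)" "disjoint_family_on A I"
  then show ?thesis using H unfolding adm_def by simp
qed

lemma indep2: assumes "adm A" "adm B" "A \<inter> B = {}"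
  shows "prob ((NN A -` {i} \<inter> space M) \<inter> (NN B -` {j} \<inter> space M))
       = pois (measure lborel A) i * pois (measure lborel B) j"
proof -
  define AA where "AA = (\<lambda>x::nat. if x = 0 then A else B)"
  define II where "II = (\<lambda>x::nat. if x = 0 then {i} else {j})"
  have "indep_vars (\<lambda>_. count_space UNIV) (\<lambda>x. NN (AA x)) {0,1}"
  proof (rule indep_pp)
    show "\<forall>i\<in>{0, 1}. adm (AA i)" using assms by (auto simp: AA_def)
    show "disjoint_family_on AA {0, 1}" using assms by (auto simp: disjoint_family_on_def AA_def)
  qed auto
  then have "prob (\<Inter>x\<in>{0,1}. NN (AA x) -` II x \<inter> space M) = (\<Prod>x\<in>{0,1}. prob (NN (AA x) -` II x \<inter> space M))"
    by (rule indep_varsD) auto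
  then show ?thesis using prob_NN[OF assms(1)] prob_NN[OF assms(2)] by (simp add: AA_def II_def)
qed

end


definition stg :: "real \<Rightarrow> nat" where "stg t = nat \<lfloor>log 2 (1 / (1 - t))\<rfloor>"

lemma stg_bounds: assumes "0 \<le> t" "t < 1"
  shows "1 - 1 / 2 ^ stg t \<le> t" "t < 1 - 1 / 2 ^ Suc (stg t)"
proof -
  define y where "y = 1 / (1 - t)"
  have y1: "1 \<le> y" using assms by (simp add: y_def)
  have L0: "0 \<le> log 2 y" using y1 by simp
  define k where "k = stg t"
  have kL: "real k = of_int \<lfloor>log 2 y\<rfloor>" using L0 by (simp add: k_def stg_def y_def)
  have "real k \<le> log 2 y" using kL by linarith
  then have "2 powr real k \<le> y" using y1 by (subst le_log_iff[symmetric]) auto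
  then have a: "2 ^ k \<le> y" by (simp add: powr_realpow)
  have "log 2 y < real k + 1" using kL by linarith
  then have "y < 2 powr (real k + 1)" using y1 log_less_iff[of 2 y "real k + 1"] by simp
  then have b: "y < 2 ^ Suc k" by (metis of_nat_Suc powr_realpow zero_less_numeral add.commute)
  have pos: "0 < 1 - t" using assms by simp
  from a have "1 - t \<le> 1 / 2 ^ k" using pos by (simp add: y_def field_simps)
  then show "1 - 1 / 2 ^ stg t \<le> t" by (simp add: k_def)
  from b have "1 / 2 ^ Suc k < 1 - t" using pos by (simp add: y_def field_simps)
  then show "t < 1 - 1 / 2 ^ Suc (stg t)" by (simp add: k_def)
qed

lemma tt_mono: "k \<le> k' \<Longrightarrow> 1 - 1 / 2 ^ k \<le> 1 - 1 / (2::real) ^ k'"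
  by (simp add: frac_le)

lemma stg_unique: assumes "1 - 1 / 2 ^ k \<le> t" "t < 1 - 1 / 2 ^ Suc k"
  shows "stg t = k"
proof -
  have "1 / (2::real) ^ k \<le> 1" by simp
  then have t0: "0 \<le> t" using assms(1) by linarith
  have "0 < 1 / (2::real) ^ Suc k" by simp
  then have t1: "t < 1" using assms(2) by linarith
  note B = stg_bounds[OF t0 t1]
  show ?thesis
  proof (rule ccontr)
    assume "stg t \<noteq> k"
    then consider "Suc (stg t) \<le> k" | "Suc k \<le> stg t" by linarith
    then show False
    proof cases
      case 1 then show ?thesis using tt_mono[OF 1] B assms by linarith
    next
      case 2 then show ?thesis using tt_mono[OF 2] B assms by linarith
    qed
  qed
qed

lemma stg_mono: assumes "0 \<le> t" "t \<le> t'" "t' < 1" shows "stg t \<le> stg t'"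
proof -
  have "1 / (1 - t) \<le> 1 / (1 - t')" using assms by (simp add: frac_le)
  then have "log 2 (1 / (1 - t)) \<le> log 2 (1 / (1 - t'))" using assms by simp
  then show ?thesis unfolding stg_def by (intro nat_mono floor_mono)
qed

definition ff :: "nat \<Rightarrow> real \<Rightarrow> real" where "ff s t = 2 ^ (s * stg t)"

lemma ff_mono: "mono_on {0..<1} (ff s)"
  unfolding mono_on_def ff_def
  by (auto intro!: power_increasing mult_le_mono2 stg_mono)

definition aa :: "nat \<Rightarrow> nat \<Rightarrow> real" where "aa s k = 2 ^ (s * k)"

definition RR :: "nat \<Rightarrow> nat \<Rightarrow> (real \<times> real) set" where
  "RR s k = {max 0 (1 - 2 / 2 ^ k) ..< 1 - 1 / 2 ^ k} \<times> {0 .. aa s (k - 1)}"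

definition DD :: "real \<Rightarrow> (real \<times> real) set" where "DD h = {0..1} \<times> {0..h}"

definition CC :: "nat \<Rightarrow> nat \<Rightarrow> (real \<times> real) set" where "CC s k = DD (aa s k) - RR s k"

definition strip :: "nat \<Rightarrow> nat \<Rightarrow> real \<Rightarrow> (real \<times> real) set" where
  "strip m i h = {real i / m .. (real i + 1) / m} \<times> {0..h}"

lemma emeasure_lborel_Times:
  fixes A B :: "real set"
  assumes "A \<in> sets borel" "B \<in> sets borel"
  shows "emeasure (lborel :: (real \<times> real) measure) (A \<times> B) = emeasure lborel A * emeasure lborel B"
  using lborel.emeasure_pair_measure_Times[of A lborel B] assms by (simp add: lborel_prod)

lemma Times_sets: fixes A B :: "real set"
  assumes "A \<in> sets borel" "B \<in> sets borel"
  shows "A \<times> B \<in> sets (lborel :: (real \<times> real) measure)"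
proof -
  have "A \<times> B \<in> sets (lborel \<Otimes>\<^sub>M lborel)" using assms by (intro pair_measureI) auto
  then show ?thesis by (simp only: lborel_prod)
qed

lemma adm_Times: fixes I :: "real set"
  assumes "I \<in> sets borel" "I \<subseteq> {0..1}" "0 \<le> h"
  shows "adm (I \<times> {0..h})" "measure lborel (I \<times> {0..h}) = measure lborel I * h"
proof -
  have eI: "emeasure lborel I \<le> emeasure lborel {0..1::real}" using assms by (intro emeasure_mono) auto
  have eI': "emeasure lborel I < \<infinity>" by (rule le_less_trans[OF eI]) simp
  have e: "emeasure lborel (I \<times> {0..h}) = emeasure lborel I * ennreal h"
    using emeasure_lborel_Times[of I "{0..h}"] assms by simp
  have S: "I \<times> {0..h} \<in> sets lborel" using assms by (intro Times_sets) auto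
  show "adm (I \<times> {0..h})" unfolding adm_def using assms e eI' S
    by (auto simp: ennreal_mult_less_top)
  show "measure lborel (I \<times> {0..h}) = measure lborel I * h"
    unfolding measure_def e using assms by (simp add: enn2real_mult)
qed

lemma adm_Diff: assumes "adm A" "B \<in> sets lborel" shows "adm (A - B)"
  "measure lborel (A - B) \<le> measure lborel A"
proof -
  have "emeasure lborel (A - B) \<le> emeasure lborel A" using assms by (intro emeasure_mono) (auto simp: adm_def)
  then show "adm (A - B)" using assms unfolding adm_def by (auto simp: less_le_trans)
  show "measure lborel (A - B) \<le> measure lborel A"
    using assms by (intro measure_mono_fmeasurable) (auto simp: adm_def fmeasurable_def)
qed

lemma adm_DD: "0 \<le> h \<Longrightarrow> adm (DD h)" "0 \<le> h \<Longrightarrow> measure lborel (DD h) = h"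
  unfolding DD_def using adm_Times[of "{0..1}" h] by auto

lemma aa_pos: "0 < aa s k" by (simp add: aa_def)

lemma RR_adm: "adm (RR s k)"
  unfolding RR_def using aa_pos[of s "k-1"]
  by (intro adm_Times) (auto simp: less_imp_le)

lemma RR_measure: assumes "1 \<le> k" shows "measure lborel (RR s k) = aa s (k - 1) / 2 ^ k"
proof -
  have p: "(2::real) \<le> 2 ^ k" using power_increasing[of 1 k "2::real"] assms by simp
  have m: "max 0 (1 - 2 / 2 ^ k) = 1 - 2 / (2::real) ^ k"
    using p by (simp add: field_simps)
  have le: "1 - 2 / (2::real) ^ k \<le> 1 - 1 / 2 ^ k" by (simp add: frac_le)
  have z: "0 \<le> 1 - 2 / (2::real) ^ k" using p by (simp add: field_simps)
  have o: "1 - 1 / (2::real) ^ k \<le> 1" by simp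
  have I: "{1 - 2 / 2 ^ k ..< 1 - 1 / (2::real) ^ k} \<subseteq> {0..1}"
  proof
    fix x assume "x \<in> {1 - 2 / 2 ^ k ..< 1 - 1 / (2::real) ^ k}"
    then have "1 - 2 / 2 ^ k \<le> x" "x < 1 - 1 / (2::real) ^ k" by auto
    then have "0 \<le> x" "x \<le> 1" using z o by linarith+
    then show "x \<in> {0..1}" by simp
  qed
  have "measure lborel (RR s k) = measure lborel {1 - 2 / 2 ^ k ..< 1 - 1 / (2::real) ^ k} * aa s (k - 1)"
    unfolding RR_def m using aa_pos[of s "k-1"] I by (intro adm_Times(2)) (auto simp: less_imp_le)
  also have "\<dots> = aa s (k - 1) / 2 ^ k" using le by (simp add: field_simps)
  finally show ?thesis .
qed

lemma CC_adm: "adm (CC s k)" "measure lborel (CC s k) \<le> aa s k"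
  unfolding CC_def using adm_Diff[OF adm_DD(1)[of "aa s k"], of "RR s k"] RR_adm[of s k]
    adm_DD(2)[of "aa s k"] aa_pos[of s k] by (auto simp: adm_def less_imp_le)

lemma RR_CC_disj: "RR s k \<inter> CC s k = {}" unfolding CC_def by auto

lemma strip_adm: assumes "i < m" "0 \<le> h"
  shows "adm (strip m i h)" "measure lborel (strip m i h) = h / m"
proof -
  have m: "0 < real m" using assms by simp
  have le: "(real i + 1) / m \<le> 1" using assms by (simp add: field_simps)
  have le2: "real i / m \<le> (real i + 1) / m" using m by (simp add: divide_right_mono)
  show "adm (strip m i h)" unfolding strip_def using assms le m
    by (intro adm_Times) auto
  show "measure lborel (strip m i h) = h / m" unfolding strip_def using assms le le2 m
    by (subst adm_Times(2)) (auto simp: field_simps)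
qed


context ppx begin

lemma fin_DD_AE: "AE \<omega> in M. \<forall>K::nat. finite (idx (DD (real K)) \<omega>)"
  unfolding AE_all_countable using fin_AE adm_DD(1) by auto

lemma pois01: assumes "0 \<le> l" shows "1 - pois l 0 - pois l 1 \<le> l ^ 2"
proof -
  have "1 - l \<le> exp (- l)" using exp_ge_add_one_self[of "-l"] by simp
  then have "(1 - l) * (1 + l) \<le> exp (- l) * (1 + l)" using assms by (intro mult_right_mono) auto
  then show ?thesis by (simp add: pois_def power2_eq_square algebra_simps)
qed

lemma strip_bad: assumes "i < m" "0 \<le> h"
  shows "prob (space M - F (strip m i h) 0 - F (strip m i h) (Suc 0)) \<le> (h / m) ^ 2"
proof -
  note a = strip_adm[OF assms]
  have "prob (space M - (F (strip m i h) 0 \<union> F (strip m i h) (Suc 0)))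
      = 1 - prob (F (strip m i h) 0 \<union> F (strip m i h) (Suc 0))"
    using F_sets[OF a(1)] by (intro prob_compl) auto
  also have "\<dots> = 1 - prob (F (strip m i h) 0) - prob (F (strip m i h) (Suc 0))"
    using F_sets[OF a(1)] by (subst finite_measure_Union) (auto simp: F_def)
  also have "\<dots> \<le> (h / m) ^ 2" using prob_F[OF a(1)] a(2) pois01[of "h / m"] assms by simp
  moreover have "space M - F (strip m i h) 0 - F (strip m i h) (Suc 0) = space M - (F (strip m i h) 0 \<union> F (strip m i h) (Suc 0))" by blast
  ultimately show ?thesis by simp
qed

lemma strip_cover: assumes "0 \<le> t" "t \<le> 1" "0 < m"
  obtains i where "i < m" "real i / m \<le> t" "t \<le> (real i + 1) / m"
proof -
  define j where "j = nat \<lfloor>t * m\<rfloor>"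
  have tm: "0 \<le> t * m" using assms by simp
  have j1: "real j \<le> t * m" "t * m < real j + 1" using tm unfolding j_def by linarith+
  define i where "i = min (m - 1) j"
  have "i < m" using assms by (simp add: i_def)
  moreover have "real i \<le> t * m" using j1 by (simp add: i_def)
  moreover have "t * m \<le> real i + 1"
  proof (cases "j \<le> m - 1")
    case True then show ?thesis using j1 by (simp add: i_def)
  next
    case False then have "i = m - 1" by (simp add: i_def)
    then have "real i + 1 = real m" using assms by simp
    then show ?thesis using assms by (simp add: mult_left_le)
  qed
  ultimately show ?thesis using that assms by (simp add: field_simps)
qed

lemma tie_null: assumes "1 \<le> r" "1 \<le> s" "r \<noteq> s"
  shows "AE \<omega> in M. \<not> (T r \<omega> = T s \<omega> \<and> X r \<omega> \<le> real K \<and> X s \<omega> \<le> real K)"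
proof -
  have [measurable]: "T r \<in> borel_measurable M" "T s \<in> borel_measurable M"
     "X r \<in> borel_measurable M" "X s \<in> borel_measurable M" using TX_meas assms by auto
  define E where "E = {\<omega>\<in>space M. T r \<omega> = T s \<omega> \<and> X r \<omega> \<le> real K \<and> X s \<omega> \<le> real K}"
  have Ev: "E \<in> events" unfolding E_def by measurable
  have bound: "prob E \<le> real K ^ 2 / m" if m: "0 < m" for m :: nat
  proof -
    define B where "B = (\<lambda>i. space M - F (strip m i (real K)) 0 - F (strip m i (real K)) (Suc 0))"
    have Bs: "B i \<in> events" if "i < m" for i
      unfolding B_def using F_sets strip_adm(1)[OF that, of "real K"] by auto
    have sub: "E \<subseteq> (\<Union>i\<in>{..<m}. B i)"
    proof
      fix \<omega> assume "\<omega> \<in> E"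
      then have w: "\<omega> \<in> space M" "T r \<omega> = T s \<omega>" "X r \<omega> \<le> real K" "X s \<omega> \<le> real K"
        unfolding E_def by auto
      obtain i where i: "i < m" "real i / m \<le> T r \<omega>" "T r \<omega> \<le> (real i + 1) / m"
        using strip_cover[of "T r \<omega>" m] TX_bounds[OF w(1) assms(1)] m by auto
      have rs: "r \<in> idx (strip m i (real K)) \<omega>" "s \<in> idx (strip m i (real K)) \<omega>"
        using i w TX_bounds[OF w(1) assms(1)] TX_bounds[OF w(1) assms(2)] assms
        by (auto simp: idx_def strip_def)
      have "\<omega> \<notin> F (strip m i (real K)) k" if "k < 2" for k
      proof
        assume "\<omega> \<in> F (strip m i (real K)) k"
        then have fi: "finite (idx (strip m i (real K)) \<omega>)" "card (idx (strip m i (real K)) \<omega>) = k"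
          unfolding F_def by (auto simp: NN_eq)
        have "card {r, s} \<le> card (idx (strip m i (real K)) \<omega>)"
          using rs fi(1) by (intro card_mono) auto
        then show False using fi(2) that assms(3) by simp
      qed
      then have "\<omega> \<in> B i" unfolding B_def using w(1) by auto
      then show "\<omega> \<in> (\<Union>i\<in>{..<m}. B i)" using i(1) by auto
    qed
    have "prob E \<le> prob (\<Union>i\<in>{..<m}. B i)"
      using Bs by (intro finite_measure_mono[OF sub]) auto
    also have "\<dots> \<le> (\<Sum>i\<in>{..<m}. prob (B i))"
      using Bs by (intro finite_measure_subadditive_finite) auto
    also have "\<dots> \<le> (\<Sum>i\<in>{..<m}. (real K / m) ^ 2)"
      unfolding B_def by (intro sum_mono strip_bad) auto
    also have "\<dots> = real K ^ 2 / m" using m by (simp add: power2_eq_square field_simps)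
    finally show ?thesis .
  qed
  have "prob E = 0"
  proof (rule ccontr)
    assume "prob E \<noteq> 0"
    then have p: "prob E > 0" using measure_nonneg[of M E] by linarith
    obtain m :: nat where m: "real K ^ 2 / prob E < m" using reals_Archimedean2 by blast
    have "0 \<le> real K ^ 2 / prob E" using p by simp
    then have m0: "0 < m" using m by linarith
    have "real K ^ 2 < m * prob E" using m p by (simp add: field_simps)
    moreover have "prob E * m \<le> real K ^ 2" using bound[OF m0] m0 by (simp add: field_simps)
    ultimately show False by (simp add: mult.commute)
  qed
  then have "E \<in> null_sets M" using Ev by (simp add: null_sets_def emeasure_eq_measure)
  then show ?thesis by (rule AE_I') (auto simp: E_def)
qed

lemma tie_AE: "AE \<omega> in M. \<forall>r s. 1 \<le> r \<longrightarrow> 1 \<le> s \<longrightarrow> r \<noteq> s \<longrightarrow> T r \<omega> \<noteq> T s \<omega>"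
proof -
  have "AE \<omega> in M. \<forall>r s K. 1 \<le> r \<longrightarrow> 1 \<le> s \<longrightarrow> r \<noteq> s \<longrightarrow>
        \<not> (T r \<omega> = T s \<omega> \<and> X r \<omega> \<le> real K \<and> X s \<omega> \<le> real K)"
    unfolding AE_all_countable using tie_null by (auto intro: AE_mp[OF AE_I2])
  then show ?thesis
  proof eventually_elim
    case (elim \<omega>)
    show ?case
    proof (intro allI impI)
      fix r s :: nat assume rs: "1 \<le> r" "1 \<le> s" "r \<noteq> s"
      define K where "K = nat \<lceil>max (X r \<omega>) (X s \<omega>)\<rceil>"
      have "X r \<omega> \<le> real K" "X s \<omega> \<le> real K" unfolding K_def by linarith+
      then show "T r \<omega> \<noteq> T s \<omega>" using elim rs by blast
    qed
  qed
qed

end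


context ppx begin

definition Sset :: "(real \<Rightarrow> real) \<Rightarrow> 'a \<Rightarrow> real set" where
  "Sset f \<omega> = {T r \<omega> | r. 1 \<le> r \<and> T r \<omega> < 1 \<and> X r \<omega> \<le> f (T r \<omega>)}"

lemma tau_eq: "memoryless_tau f T X \<omega> = (if Sset f \<omega> = {} then 1 else Inf (Sset f \<omega>))"
  unfolding memoryless_tau_def Sset_def Let_def by simp

lemma Sset_bdd: "\<omega> \<in> space M \<Longrightarrow> bdd_below (Sset f \<omega>)"
  unfolding Sset_def bdd_below_def using TX_bounds(1) by blast

lemma tau_1: assumes "\<omega> \<in> space M" "memoryless_tau f T X \<omega> = 1" shows "Sset f \<omega> = {}"
proof (rule ccontr)
  assume ne: "Sset f \<omega> \<noteq> {}"
  then obtain r where r: "1 \<le> r" "T r \<omega> < 1" "X r \<omega> \<le> f (T r \<omega>)" unfolding Sset_def by auto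
  then have "T r \<omega> \<in> Sset f \<omega>" unfolding Sset_def by auto
  then have "Inf (Sset f \<omega>) \<le> T r \<omega>" by (rule cInf_lower[OF _ Sset_bdd[OF assms(1)]])
  then show False using assms(2) ne r unfolding tau_eq by simp
qed

lemma RR_in_S: assumes "\<omega> \<in> space M" "i \<in> idx (RR s k) \<omega>"
  shows "1 \<le> k" "T i \<omega> < 1 - 1 / 2 ^ k" "T i \<omega> \<in> Sset (ff s) \<omega>"
proof -
  have i: "1 \<le> i" "max 0 (1 - 2 / 2 ^ k) \<le> T i \<omega>" "T i \<omega> < 1 - 1 / 2 ^ k" "X i \<omega> \<le> aa s (k - 1)"
    using assms(2) unfolding idx_def RR_def by auto
  show k: "1 \<le> k"
  proof (rule ccontr)
    assume "\<not> 1 \<le> k" then have "k = 0" by simp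
    then show False using i(2,3) by simp
  qed
  show "T i \<omega> < 1 - 1 / 2 ^ k" by (rule i(3))
  have e: "(2::real) / 2 ^ k = 1 / 2 ^ (k - 1)" using k by (cases k) auto
  have st: "stg (T i \<omega>) = k - 1"
    using i(2,3) k e by (intro stg_unique) auto
  have "0 < 1 / (2::real) ^ k" by simp
  then have "T i \<omega> < 1" using i(3) by linarith
  then show "T i \<omega> \<in> Sset (ff s) \<omega>" unfolding Sset_def using i(1,4) st
    by (auto simp: ff_def aa_def)
qed

lemma S_empty_RR: assumes "\<omega> \<in> space M" "Sset (ff s) \<omega> = {}" shows "idx (RR s k) \<omega> = {}"
  using RR_in_S(3)[OF assms(1)] assms(2) by blast

lemma main_incl:
  assumes w: "\<omega> \<in> space M"
    and good: "\<forall>K::nat. finite (idx (DD (real K)) \<omega>)"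
    and dist: "\<forall>r s. 1 \<le> r \<longrightarrow> 1 \<le> s \<longrightarrow> r \<noteq> s \<longrightarrow> T r \<omega> \<noteq> T s \<omega>"
    and r: "1 \<le> r" and tau: "memoryless_tau (ff s) T X \<omega> = T r \<omega>"
    and ne: "Sset (ff s) \<omega> \<noteq> {}"
  shows "\<exists>k. NN (RR s k) \<omega> = 0 \<and> r \<le> NN (CC s k) \<omega>"
proof -
  define Sidx where "Sidx = {i. 1 \<le> i \<and> T i \<omega> < 1 \<and> X i \<omega> \<le> ff s (T i \<omega>)}"
  have Seq: "Sset (ff s) \<omega> = (\<lambda>i. T i \<omega>) ` Sidx" unfolding Sset_def Sidx_def by auto
  obtain i0 where i0: "i0 \<in> Sidx" using ne Seq by auto
  define K0 :: nat where "K0 = 2 ^ (s * stg (T i0 \<omega>))"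
  define J where "J = {i \<in> Sidx. T i \<omega> \<le> T i0 \<omega>}"
  have JI: "J \<subseteq> idx (DD (real K0)) \<omega>"
  proof
    fix i assume "i \<in> J"
    then have i: "1 \<le> i" "T i \<omega> < 1" "X i \<omega> \<le> ff s (T i \<omega>)" "T i \<omega> \<le> T i0 \<omega>"
      unfolding J_def Sidx_def by auto
    have "ff s (T i \<omega>) \<le> ff s (T i0 \<omega>)"
      using ff_mono[of s] i TX_bounds(1)[OF w i(1)] i0 unfolding mono_on_def Sidx_def by auto
    also have "\<dots> = real K0" by (simp add: ff_def K0_def)
    finally show "i \<in> idx (DD (real K0)) \<omega>" using i TX_bounds[OF w i(1)]
      by (auto simp: idx_def DD_def)
  qed
  have Jfin: "finite J" using good JI finite_subset by blast
  have Jne: "i0 \<in> J" using i0 unfolding J_def by auto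
  define m where "m = Min ((\<lambda>i. T i \<omega>) ` J)"
  have "m \<in> (\<lambda>i. T i \<omega>) ` J" unfolding m_def using Jfin Jne by (intro Min_in) auto
  then obtain i1 where i1: "i1 \<in> J" "m = T i1 \<omega>" by auto
  have mle: "m \<le> T j \<omega>" if "j \<in> J" for j unfolding m_def using Jfin that by (intro Min_le) auto
  have infS: "Inf (Sset (ff s) \<omega>) = T i1 \<omega>"
  proof (rule cInf_eq_minimum)
    show "T i1 \<omega> \<in> Sset (ff s) \<omega>" using i1 Seq unfolding J_def by auto
    fix x assume "x \<in> Sset (ff s) \<omega>"
    then obtain j where j: "j \<in> Sidx" "x = T j \<omega>" using Seq by auto
    show "T i1 \<omega> \<le> x"
    proof (cases "T j \<omega> \<le> T i0 \<omega>")
      case True then show ?thesis using mle[of j] j i1 unfolding J_def by auto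
    next
      case False then show ?thesis using mle[OF Jne] j i1 by auto
    qed
  qed
  have "T i1 \<omega> = T r \<omega>" using tau ne infS unfolding tau_eq by simp
  then have "i1 = r" using dist r i1 unfolding J_def Sidx_def by auto
  then have rS: "r \<in> Sidx" using i1 unfolding J_def by auto
  define k where "k = stg (T r \<omega>)"
  have Tr: "0 \<le> T r \<omega>" "T r \<omega> < 1" using rS TX_bounds[OF w r] unfolding Sidx_def by auto
  have Xr: "X r \<omega> \<le> aa s k" using rS unfolding Sidx_def k_def ff_def aa_def by auto
  have R0: "idx (RR s k) \<omega> = {}"
  proof (rule ccontr)
    assume "idx (RR s k) \<omega> \<noteq> {}"
    then obtain i where i: "i \<in> idx (RR s k) \<omega>" by auto
    note RI = RR_in_S[OF w i]
    have "1 - 1 / 2 ^ k \<le> T r \<omega>" using stg_bounds(1)[OF Tr] unfolding k_def .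
    moreover have "Inf (Sset (ff s) \<omega>) \<le> T i \<omega>" by (rule cInf_lower[OF RI(3) Sset_bdd[OF w]])
    ultimately show False using RI(2) infS[unfolded \<open>i1 = r\<close>] by linarith
  qed
  define K :: nat where "K = 2 ^ (s * k)"
  have aK: "aa s k = real K" by (simp add: aa_def K_def)
  have CD: "idx (CC s k) \<omega> = idx (DD (aa s k)) \<omega>" using R0 unfolding CC_def idx_def by auto
  have sub: "{1..r} \<subseteq> idx (CC s k) \<omega>"
  proof
    fix i assume "i \<in> {1..r}"
    then have i: "1 \<le> i" "i \<le> r" by auto
    have "X i \<omega> \<le> X r \<omega>" by (rule X_mono[OF w i])
    then show "i \<in> idx (CC s k) \<omega>" unfolding CD using Xr TX_bounds[OF w i(1)] i(1)
      by (auto simp: idx_def DD_def)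
  qed
  have "finite (idx (CC s k) \<omega>)" unfolding CD aK using good by auto
  then have "card {1..r} \<le> card (idx (CC s k) \<omega>)" using sub by (rule card_mono)
  then have "r \<le> NN (CC s k) \<omega>" by (simp add: NN_eq)
  moreover have "NN (RR s k) \<omega> = 0" using R0 by (simp add: NN_eq)
  ultimately show ?thesis by blast
qed

end


lemma powr_split: fixes x m \<beta> :: real
  assumes x: "1 \<le> x" and m: "1 \<le> m" and b: "0 < \<beta>" "\<beta> < 1"
  shows "x powr \<beta> \<le> m powr (\<beta> / (1 - \<beta>)) + x / m"
proof -
  define g where "g = 1 / (1 - \<beta>)"
  define J where "J = m powr g"
  have J0: "0 < J" using m by (simp add: J_def)
  have gb: "g * \<beta> = \<beta> / (1 - \<beta>)" "g * (\<beta> - 1) = -1" using b by (auto simp: g_def field_simps)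
  show ?thesis
  proof (cases "x \<le> J")
    case True
    have "x powr \<beta> \<le> J powr \<beta>" using True b x by (intro powr_mono2) auto
    also have "\<dots> = m powr (\<beta> / (1 - \<beta>))" unfolding J_def powr_powr gb ..
    finally show ?thesis using x m by (smt (verit) divide_nonneg_nonneg)
  next
    case False
    have "x powr \<beta> = x * x powr (\<beta> - 1)" using powr_add[of x 1 "\<beta> - 1"] x by simp
    also have "x powr (\<beta> - 1) \<le> J powr (\<beta> - 1)" using False J0 b by (intro powr_mono2') auto
    also have "J powr (\<beta> - 1) = 1 / m" unfolding J_def powr_powr gb using m by (simp add: powr_minus_divide)
    finally have "x powr \<beta> \<le> x / m" using x by (simp add: mult_left_mono)
    then show ?thesis using m by (smt (verit) powr_ge_zero)
  qed
qed

lemma jq_bound: fixes q :: "nat \<Rightarrow> real"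
  assumes q: "\<forall>r\<ge>1. q r < c * exp (real r powr \<beta>)" and c: "0 < c" and b: "0 < \<beta>" "\<beta> < 1"
    and m: "1 \<le> m" and j: "1 \<le> j"
  shows "real j * q j \<le> c * m * exp (m powr (\<beta> / (1 - \<beta>))) * exp (2 * real j / m)"
proof -
  have j1: "1 \<le> real j" using j by simp
  have "real j / m \<le> exp (real j / m)" using exp_ge_add_one_self[of "real j / m"] by linarith
  then have jm: "real j \<le> m * exp (real j / m)" using m by (simp add: field_simps)
  have "q j \<le> c * exp (real j powr \<beta>)" using q j by (simp add: less_imp_le)
  also have "\<dots> \<le> c * exp (m powr (\<beta> / (1 - \<beta>)) + real j / m)"
    using powr_split[OF j1 m b] c by simp
  finally have qj: "q j \<le> c * exp (m powr (\<beta> / (1 - \<beta>)) + real j / m)" .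
  have "real j * q j \<le> (m * exp (real j / m)) * (c * exp (m powr (\<beta> / (1 - \<beta>)) + real j / m))"
  proof (cases "q j \<ge> 0")
    case True then show ?thesis using jm qj by (intro mult_mono) auto
  next
    case False
    then have "real j * q j \<le> 0" using j by (simp add: mult_nonneg_nonpos)
    also have "0 \<le> (m * exp (real j / m)) * (c * exp (m powr (\<beta> / (1 - \<beta>)) + real j / m))"
      using m c by simp
    finally show ?thesis .
  qed
  also have "\<dots> = c * m * exp (m powr (\<beta> / (1 - \<beta>))) * exp (2 * real j / m)"
    by (simp add: exp_add[symmetric] field_simps)
  finally show ?thesis .
qed

lemma exp_sum_pois: assumes "0 \<le> l"
  shows "(\<lambda>j. pois l j * exp (2 * real j / m)) sums (exp (- l) * exp (l * exp (2 / m)))"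
proof -
  have "(\<lambda>j. (l * exp (2 / m)) ^ j / fact j) sums exp (l * exp (2 / m))"
    using exp_converges[of "l * exp (2 / m)"] by (simp add: divide_inverse mult.commute)
  then have "(\<lambda>j. exp (- l) * ((l * exp (2 / m)) ^ j / fact j)) sums (exp (- l) * exp (l * exp (2 / m)))"
    by (rule sums_mult)
  moreover have "pois l j * exp (2 * real j / m) = exp (- l) * ((l * exp (2 / m)) ^ j / fact j)" for j
  proof -
    have "exp (2 * real j / m) = exp (2 / m) ^ j" using exp_of_nat_mult[of j "2 / m"] by (simp add: field_simps)
    then show ?thesis by (simp add: pois_def power_mult_distrib)
  qed
  ultimately show ?thesis by simp
qed

lemma exp_small: fixes m l :: real assumes "4 \<le> m" "0 \<le> l"
  shows "exp (- l) * exp (l * exp (2 / m)) \<le> exp (4 * l / m)"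
proof -
  have "norm (2 / m) \<le> 1 / 2" using assms by simp
  then have "norm (exp (2 / m)) \<le> 1 + 2 * norm (2 / m)" by (rule exp_bound_lemma)
  then have e: "exp (2 / m) \<le> 1 + 4 / m" using assms by simp
  have "exp (- l) * exp (l * exp (2 / m)) = exp (l * exp (2 / m) - l)" by (simp add: exp_diff exp_minus field_simps)
  also have "\<dots> \<le> exp (4 * l / m)"
  proof -
    have "l * exp (2 / m) \<le> l * (1 + 4 / m)" using e assms by (intro mult_left_mono) auto
    then show ?thesis by (simp add: field_simps)
  qed
  finally show ?thesis .
qed

lemma poisson_moment: fixes q :: "nat \<Rightarrow> real"
  assumes q: "\<forall>r\<ge>1. q r < c * exp (real r powr \<beta>)" and c: "0 < c" and b: "0 < \<beta>" "\<beta> < 1"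
    and m: "4 \<le> m" and l: "0 \<le> l" "l \<le> L"
  shows "(\<Sum>j. ennreal (real j * q j * pois l j))
     \<le> ennreal (c * m * exp (m powr (\<beta> / (1 - \<beta>))) * exp (4 * L / m))"
proof -
  define C where "C = c * m * exp (m powr (\<beta> / (1 - \<beta>)))"
  have C0: "0 \<le> C" using c m by (simp add: C_def)
  have pt: "ennreal (real j * q j * pois l j) \<le> ennreal (C * (pois l j * exp (2 * real j / m)))" for j
  proof (cases "j = 0")
    case True then show ?thesis by simp
  next
    case False
    have "real j * q j \<le> C * exp (2 * real j / m)" unfolding C_def
      using jq_bound[OF q c b, of m j] m False by simp
    then have "real j * q j * pois l j \<le> C * exp (2 * real j / m) * pois l j"
      using pois_nonneg[OF l(1)] by (intro mult_right_mono) auto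
    then show ?thesis by (intro ennreal_leI) (simp add: mult_ac)
  qed
  have S: "(\<lambda>j. C * (pois l j * exp (2 * real j / m))) sums (C * (exp (- l) * exp (l * exp (2 / m))))"
    by (intro sums_mult exp_sum_pois l)
  have "(\<Sum>j. ennreal (real j * q j * pois l j)) \<le> (\<Sum>j. ennreal (C * (pois l j * exp (2 * real j / m))))"
    by (intro suminf_le pt) auto
  also have "\<dots> = ennreal (C * (exp (- l) * exp (l * exp (2 / m))))"
    using S C0 pois_nonneg[OF l(1)] by (subst suminf_ennreal2) (auto simp: sums_iff)
  also have "\<dots> \<le> ennreal (C * exp (4 * L / m))"
  proof (intro ennreal_leI mult_left_mono C0)
    have "exp (- l) * exp (l * exp (2 / m)) \<le> exp (4 * l / m)" by (rule exp_small[OF m l(1)])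
    also have "\<dots> \<le> exp (4 * L / m)" using m l by (simp add: divide_right_mono)
    finally show "exp (- l) * exp (l * exp (2 / m)) \<le> exp (4 * L / m)" .
  qed
  finally show ?thesis by (simp add: C_def)
qed


lemma tail_ineq: fixes x :: real and d :: nat assumes d: "1 \<le> d" and x: "2 ^ (2 * d + 6) \<le> x"
  shows "4 * x ^ 2 + 4 ^ d * x ^ (2 * d) + x ^ (2 * d + 1) - x ^ (2 * d + 2) / 2 ^ (2 * d + 3) \<le> - x"
proof -
  have x1: "1 \<le> x" using x by (smt (verit) one_le_power)
  define X where "X = x ^ (2 * d + 1)"
  have X0: "x \<le> X" unfolding X_def using x1 power_increasing[of 1 "2*d+1" x] by simp
  have "(2::real) ^ (2 * d + 6) = 8 * 2 ^ (2 * d + 3)" by (simp add: power_add)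
  then have "8 \<le> x / 2 ^ (2 * d + 3)" using x by (simp add: field_simps)
  then have "X * 8 \<le> X * (x / 2 ^ (2 * d + 3))" using X0 x1 by (intro mult_left_mono) auto
  then have h1: "8 * X \<le> x ^ (2 * d + 2) / 2 ^ (2 * d + 3)" unfolding X_def by (simp add: field_simps)
  have "(4::real) ^ d = 2 ^ (2 * d)" by (simp add: power_mult)
  also have "\<dots> \<le> 2 ^ (2 * d + 6)" by (intro power_increasing) auto
  finally have "(4::real) ^ d \<le> x" using x by linarith
  then have h2: "4 ^ d * x ^ (2 * d) \<le> X" unfolding X_def using x1 by (simp add: mult_right_mono)
  have h3: "x ^ 2 \<le> X" unfolding X_def using x1 d by (intro power_increasing) auto
  show ?thesis using h1 h2 h3 X0 x1 unfolding X_def by linarith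
qed

lemma k_le_pow: "real k \<le> (2::real) ^ k"
proof -
  have "k < 2 ^ k" by (rule less_exp)
  then have "real k \<le> real ((2::nat) ^ k)" by linarith
  then show ?thesis by simp
qed

lemma exp_combine: fixes m c A B R :: real assumes "0 < m"
  shows "exp (- R) * (c * m * exp A * exp B) = c * exp (ln m + A + B - R)"
proof -
  have "exp (ln m + A + B - R) = m * exp A * exp B * exp (- R)"
    using assms by (simp add: exp_add exp_diff exp_minus divide_inverse)
  then show ?thesis by simp
qed

lemma term_bound:
  fixes c \<delta> :: real and d k :: nat
  assumes d: "1 \<le> d" "\<delta> \<le> real d" and k: "2 * d + 6 \<le> k" and c: "0 < c"
  shows "exp (- (aa (2 * d + 3) (k - 1) / 2 ^ k)) * (c * 4 ^ (k + 1) * exp ((4 ^ (k + 1)) powr \<delta>)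
            * exp (4 * aa (2 * d + 3) k / 4 ^ (k + 1))) \<le> c * exp (- real k)"
proof -
  define s where "s = 2 * d + 3"
  define x :: real where "x = 2 ^ k"
  define m :: real where "m = 4 ^ (k + 1)"
  have k1: "1 \<le> k" using k by simp
  have x: "2 ^ (2 * d + 6) \<le> x" unfolding x_def using k by (intro power_increasing) auto
  have x1: "1 \<le> x" unfolding x_def by simp
  have ask: "aa s k = x ^ s" unfolding aa_def x_def by (simp add: power_mult[symmetric] mult.commute)
  have pr: "aa s (k - 1) * 2 ^ s = aa s k" unfolding aa_def
    using k1 by (simp add: power_add[symmetric] algebra_simps)
  have e1: "aa s (k - 1) = x ^ s / 2 ^ s" using pr ask by (simp add: field_simps)
  have ss: "s = Suc (2 * d + 2)" unfolding s_def by simp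
  have xs: "x ^ s = x ^ (2 * d + 2) * x" unfolding ss by (simp only: power_Suc2)
  have x0: "0 < x" using x1 by simp
  have R: "aa s (k - 1) / 2 ^ k = x ^ (2 * d + 2) / 2 ^ (2 * d + 3)"
    unfolding e1 xs x_def[symmetric] using x0 by (simp add: s_def)
  have "((2::real) ^ k) ^ 2 = (2 ^ 2) ^ k" by (metis power_mult mult.commute)
  then have m4: "m = 4 * x ^ 2" unfolding m_def x_def by simp
  have m1: "1 \<le> m" using m4 x1 by (smt (verit) one_le_power)
  have "m powr \<delta> \<le> m powr real d" using m1 d by (intro powr_mono) auto
  also have "\<dots> = m ^ d" using m1 by (simp add: powr_realpow)
  also have "\<dots> = 4 ^ d * x ^ (2 * d)" unfolding m4 by (simp add: power_mult_distrib power_mult[symmetric])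
  finally have A: "m powr \<delta> \<le> 4 ^ d * x ^ (2 * d)" .
  have s2: "s = (2 * d + 1) + 2" unfolding s_def by simp
  have xs2: "x ^ s = x ^ (2 * d + 1) * x ^ 2" unfolding s2 by (simp only: power_add)
  have B: "4 * aa s k / m = x ^ (2 * d + 1)" using x1 by (simp add: ask m4 xs2)
  have "ln m < m" using m1 by (intro ln_less_self) simp
  then have L: "ln m \<le> 4 * x ^ 2" using m4 by simp
  have "exp (- (aa s (k - 1) / 2 ^ k)) * (c * m * exp (m powr \<delta>) * exp (4 * aa s k / m))
      = c * exp (ln m + m powr \<delta> + 4 * aa s k / m - aa s (k - 1) / 2 ^ k)"
    using m1 by (intro exp_combine) simp
  also have "\<dots> \<le> c * exp (- real k)"
  proof -
    have "ln m + m powr \<delta> + 4 * aa s k / m - aa s (k - 1) / 2 ^ k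
        \<le> 4 * x ^ 2 + 4 ^ d * x ^ (2 * d) + x ^ (2 * d + 1) - x ^ (2 * d + 2) / 2 ^ (2 * d + 3)"
      using A B L R by linarith
    also have "\<dots> \<le> - x" by (rule tail_ineq[OF d(1) x])
    also have "\<dots> \<le> - real k" using k_le_pow[of k] by (simp add: x_def)
    finally show ?thesis using c by simp
  qed
  finally show ?thesis by (simp add: s_def m_def)
qed


lemma ennsum_swap: "(\<Sum>i. \<Sum>j. f i j) = (\<Sum>j. \<Sum>i. (f i j :: ennreal))"
proof -
  have "(\<Sum>i. \<Sum>j. f i j) = (\<Sum>i. \<integral>\<^sup>+j. f i j \<partial>count_space UNIV)"
    by (simp add: nn_integral_count_space_nat)
  also have "\<dots> = (\<integral>\<^sup>+j. (\<Sum>i. f i j) \<partial>count_space UNIV)"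
    by (rule nn_integral_suminf[symmetric]) simp
  also have "\<dots> = (\<Sum>j. \<Sum>i. f i j)" by (simp add: nn_integral_count_space_nat)
  finally show ?thesis .
qed

lemma RR_exp_bound: assumes d: "1 \<le> d" and k: "2 * d + 6 \<le> k"
  shows "exp (- measure lborel (RR (2 * d + 3) k)) \<le> exp (- real k)"
proof -
  define m :: real where "m = 4 ^ (k + 1)"
  have m1: "1 \<le> m" unfolding m_def by (rule one_le_power) simp
  have "1 * 1 * 1 \<le> m * exp (m powr 0) * exp (4 * aa (2 * d + 3) k / m)"
    using m1 aa_pos[of "2*d+3" k] by (intro mult_mono) auto
  then have F: "1 \<le> m * exp (m powr 0) * exp (4 * aa (2 * d + 3) k / m)" by simp
  have k1: "1 \<le> k" using k by simp
  have R: "measure lborel (RR (2 * d + 3) k) = aa (2 * d + 3) (k - 1) / 2 ^ k" by (rule RR_measure[OF k1])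
  have "exp (- measure lborel (RR (2 * d + 3) k))
     \<le> exp (- measure lborel (RR (2 * d + 3) k)) * (m * exp (m powr 0) * exp (4 * aa (2 * d + 3) k / m))"
    using F by simp
  also have "\<dots> \<le> 1 * exp (- real k)"
    using term_bound[OF d(1) _ k, of 0 1] unfolding R m_def by simp
  finally show ?thesis by simp
qed

context ppx begin

lemma Z0_null: assumes d: "1 \<le> d"
  shows "(\<Inter>k. NN (RR (2 * d + 3) k) -` {0} \<inter> space M) \<in> events"
    "emeasure M (\<Inter>k. NN (RR (2 * d + 3) k) -` {0} \<inter> space M) = 0"
proof -
  define Z where "Z = (\<Inter>k. NN (RR (2 * d + 3) k) -` {0} \<inter> space M)"
  have ev: "NN (RR (2 * d + 3) k) -` {0} \<inter> space M \<in> events" for k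
    using measurable_sets[OF NN_meas[OF RR_adm], of "{0}"] by simp
  show Zs: "Z \<in> events" unfolding Z_def by (rule sets.countable_INT) (use ev in auto)
  have b: "prob Z \<le> 1 / (1 + real k)" if k: "2 * d + 6 \<le> k" for k
  proof -
    have "prob Z \<le> prob (NN (RR (2 * d + 3) k) -` {0} \<inter> space M)"
      using ev by (intro finite_measure_mono) (auto simp: Z_def)
    also have "\<dots> = exp (- measure lborel (RR (2 * d + 3) k))"
      using prob_NN[OF RR_adm] by (simp add: pois_def)
    also have "\<dots> \<le> exp (- real k)" by (rule RR_exp_bound[OF d k])
    also have "\<dots> \<le> 1 / (1 + real k)"
    proof -
      have "1 + real k \<le> exp (real k)" by (rule exp_ge_add_one_self)
      then show ?thesis by (simp add: exp_minus field_simps)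
    qed
    finally show ?thesis .
  qed
  have "prob Z = 0"
  proof (rule ccontr)
    assume "prob Z \<noteq> 0"
    then have p: "prob Z > 0" using measure_nonneg[of M Z] by linarith
    obtain n :: nat where n: "1 / prob Z < n" using reals_Archimedean2 by blast
    define k where "k = n + 2 * d + 6"
    have "prob Z \<le> 1 / (1 + real k)" by (rule b) (simp add: k_def)
    moreover have "1 / (1 + real k) < prob Z"
    proof -
      have "1 / prob Z < 1 + real k" using n by (simp add: k_def)
      then show ?thesis using p by (simp add: field_simps)
    qed
    ultimately show False by simp
  qed
  then show "emeasure M Z = 0" using Zs by (simp add: emeasure_eq_measure)
qed

definition Pkj :: "nat \<Rightarrow> nat \<Rightarrow> nat \<Rightarrow> real" where
  "Pkj s k j = exp (- measure lborel (RR s k)) * pois (measure lborel (CC s k)) j"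

lemma Pkj_nonneg: "0 \<le> Pkj s k j"
  unfolding Pkj_def by (intro mult_nonneg_nonneg pois_nonneg) auto

lemma Er_bound: assumes d: "1 \<le> d" and r: "1 \<le> r"
  shows "emeasure M {\<omega>\<in>space M. memoryless_tau (ff (2 * d + 3)) T X \<omega> = T r \<omega>}
     \<le> (\<Sum>k. \<Sum>j. ennreal (if r \<le> j then Pkj (2 * d + 3) k j else 0))"
proof -
  define s where "s = 2 * d + 3"
  have "AE \<omega> in M. (\<forall>K::nat. finite (idx (DD (real K)) \<omega>)) \<and>
     (\<forall>r s. 1 \<le> r \<longrightarrow> 1 \<le> s \<longrightarrow> r \<noteq> s \<longrightarrow> T r \<omega> \<noteq> T s \<omega>)"
    using fin_DD_AE tie_AE by eventually_elim auto
  then obtain N0 where N0: "{\<omega>\<in>space M. \<not> ((\<forall>K::nat. finite (idx (DD (real K)) \<omega>)) \<and>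
     (\<forall>r s. 1 \<le> r \<longrightarrow> 1 \<le> s \<longrightarrow> r \<noteq> s \<longrightarrow> T r \<omega> \<noteq> T s \<omega>))} \<subseteq> N0"
    "emeasure M N0 = 0" "N0 \<in> events" by (rule AE_E)
  define Z where "Z = (\<Inter>k. NN (RR s k) -` {0} \<inter> space M)"
  have Zs: "Z \<in> events" "emeasure M Z = 0" using Z0_null[OF d] unfolding Z_def s_def by auto
  define V where "V = (\<lambda>k j. if r \<le> j then (NN (RR s k) -` {0} \<inter> space M) \<inter> (NN (CC s k) -` {j} \<inter> space M) else {})"
  have Vs: "V k j \<in> events" for k j
    using measurable_sets[OF NN_meas[OF RR_adm], of "{0}"] measurable_sets[OF NN_meas[OF CC_adm(1)], of "{j}"]
    unfolding V_def by auto
  define U where "U = (\<lambda>k. \<Union>j. V k j)"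
  have Us: "U k \<in> events" for k unfolding U_def using Vs by auto
  have UUs: "(\<Union>k. U k) \<in> events" using Us by auto
  have sub: "{\<omega>\<in>space M. memoryless_tau (ff s) T X \<omega> = T r \<omega>} \<subseteq> N0 \<union> Z \<union> (\<Union>k. U k)"
  proof
    fix \<omega> assume "\<omega> \<in> {\<omega>\<in>space M. memoryless_tau (ff s) T X \<omega> = T r \<omega>}"
    then have w: "\<omega> \<in> space M" and tau: "memoryless_tau (ff s) T X \<omega> = T r \<omega>" by auto
    show "\<omega> \<in> N0 \<union> Z \<union> (\<Union>k. U k)"
    proof (cases "\<omega> \<in> N0")
      case True then show ?thesis by simp
    next
      case False
      then have good: "\<forall>K::nat. finite (idx (DD (real K)) \<omega>)"
        and dist: "\<forall>r s. 1 \<le> r \<longrightarrow> 1 \<le> s \<longrightarrow> r \<noteq> s \<longrightarrow> T r \<omega> \<noteq> T s \<omega>"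
        using N0(1) w by auto
      show ?thesis
      proof (cases "Sset (ff s) \<omega> = {}")
        case True
        then have "\<omega> \<in> Z" using S_empty_RR[OF w True] w unfolding Z_def by (simp add: NN_eq)
        then show ?thesis by simp
      next
        case False
        obtain k where k: "NN (RR s k) \<omega> = 0" "r \<le> NN (CC s k) \<omega>"
          using main_incl[OF w good dist r tau False] by blast
        then have "\<omega> \<in> V k (NN (CC s k) \<omega>)" unfolding V_def using w by auto
        then show ?thesis unfolding U_def by blast
      qed
    qed
  qed
  have "emeasure M {\<omega>\<in>space M. memoryless_tau (ff s) T X \<omega> = T r \<omega>} \<le> emeasure M (N0 \<union> Z \<union> (\<Union>k. U k))"
    using N0(3) Zs(1) UUs by (intro emeasure_mono[OF sub]) auto
  also have "\<dots> \<le> emeasure M (N0 \<union> Z) + emeasure M (\<Union>k. U k)"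
    using N0(3) Zs(1) UUs by (intro emeasure_subadditive) auto
  also have "emeasure M (N0 \<union> Z) \<le> emeasure M N0 + emeasure M Z"
    using N0(3) Zs(1) by (intro emeasure_subadditive) auto
  also have "emeasure M (\<Union>k. U k) \<le> (\<Sum>k. emeasure M (U k))"
    using Us by (intro emeasure_subadditive_countably) auto
  also have "(\<Sum>k. emeasure M (U k)) \<le> (\<Sum>k. \<Sum>j. emeasure M (V k j))"
    unfolding U_def using Vs by (intro suminf_le emeasure_subadditive_countably) auto
  also have "(\<Sum>k. \<Sum>j. emeasure M (V k j)) = (\<Sum>k. \<Sum>j. ennreal (if r \<le> j then Pkj s k j else 0))"
  proof (intro suminf_cong)
    fix k j
    show "emeasure M (V k j) = ennreal (if r \<le> j then Pkj s k j else 0)"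
    proof (cases "r \<le> j")
      case True
      have "emeasure M (V k j) = ennreal (prob (V k j))" using Vs by (simp add: emeasure_eq_measure)
      also have "prob (V k j) = pois (measure lborel (RR s k)) 0 * pois (measure lborel (CC s k)) j"
        unfolding V_def using True by (simp add: indep2[OF RR_adm CC_adm(1) RR_CC_disj])
      finally show ?thesis using True by (simp add: Pkj_def pois_def)
    qed (simp add: V_def)
  qed
  finally have "emeasure M {\<omega>\<in>space M. memoryless_tau (ff s) T X \<omega> = T r \<omega>}
     \<le> (\<Sum>k. \<Sum>j. ennreal (if r \<le> j then Pkj s k j else 0))" using N0(2) Zs(2) by simp
  then show ?thesis by (simp only: s_def)
qed

lemma tau1_null: assumes d: "1 \<le> d"
  shows "emeasure M {\<omega>\<in>space M. memoryless_tau (ff (2 * d + 3)) T X \<omega> = 1} = 0"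
proof -
  define Z where "Z = (\<Inter>k. NN (RR (2 * d + 3) k) -` {0} \<inter> space M)"
  have Zs: "Z \<in> events" "emeasure M Z = 0" using Z0_null[OF d] unfolding Z_def by auto
  have "{\<omega>\<in>space M. memoryless_tau (ff (2 * d + 3)) T X \<omega> = 1} \<subseteq> Z"
  proof
    fix \<omega> assume "\<omega> \<in> {\<omega>\<in>space M. memoryless_tau (ff (2 * d + 3)) T X \<omega> = 1}"
    then have w: "\<omega> \<in> space M" and t: "memoryless_tau (ff (2 * d + 3)) T X \<omega> = 1" by auto
    show "\<omega> \<in> Z" using S_empty_RR[OF w tau_1[OF w t]] w unfolding Z_def by (simp add: NN_eq)
  qed
  then have "emeasure M {\<omega>\<in>space M. memoryless_tau (ff (2 * d + 3)) T X \<omega> = 1} \<le> emeasure M Z"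
    using Zs by (intro emeasure_mono) auto
  then show ?thesis using Zs by simp
qed

lemma inner_bound: fixes q :: "nat \<Rightarrow> real"
  assumes q0: "\<forall>r\<ge>1. 0 \<le> q r" and qm: "mono_on {1..} q" and P: "0 \<le> P"
  shows "(\<Sum>r. ennreal (if Suc r \<le> j then q (Suc r) * P else 0)) \<le> ennreal (real j * q j * P)"
proof -
  have "(\<Sum>r. ennreal (if Suc r \<le> j then q (Suc r) * P else 0)) = (\<Sum>r\<in>{..<j}. ennreal (if Suc r \<le> j then q (Suc r) * P else 0))"
    by (rule suminf_finite) auto
  also have "\<dots> = ennreal (\<Sum>r\<in>{..<j}. (if Suc r \<le> j then q (Suc r) * P else 0))"
    using q0 P by (intro sum_ennreal) auto
  also have "\<dots> \<le> ennreal (\<Sum>r\<in>{..<j}. q j * P)"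
  proof (intro ennreal_leI sum_mono)
    fix r assume r: "r \<in> {..<j}"
    then have "q (Suc r) \<le> q j" using qm unfolding mono_on_def by auto
    then show "(if Suc r \<le> j then q (Suc r) * P else 0) \<le> q j * P" using r P by (auto intro: mult_right_mono)
  qed
  also have "\<dots> = ennreal (real j * q j * P)" by (simp add: mult.assoc)
  finally show ?thesis .
qed

lemma sum_bound: fixes q :: "nat \<Rightarrow> real"
  assumes q0: "\<forall>r\<ge>1. 0 \<le> q r" and qm: "mono_on {1..} q" and c: "0 < c"
    and b: "0 < \<beta>" "\<beta> < 1" and qb: "\<forall>r\<ge>1. q r < c * exp (real r powr \<beta>)"
    and d: "1 \<le> d" "\<beta> / (1 - \<beta>) \<le> real d"
  shows "(\<Sum>r. ennreal (q (Suc r)) * emeasure M {\<omega>\<in>space M. memoryless_tau (ff (2 * d + 3)) T X \<omega> = T (Suc r) \<omega>}) < \<top>"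
proof -
  define s where "s = 2 * d + 3"
  define u where "u = (\<lambda>k. exp (- measure lborel (RR s k)) * (c * 4 ^ (k + 1) * exp ((4 ^ (k + 1)) powr (\<beta> / (1 - \<beta>)))
            * exp (4 * aa s k / 4 ^ (k + 1))))"
  have u0: "0 \<le> u k" for k unfolding u_def using c by simp
  have us: "summable u"
  proof (rule summable_comparison_test')
    show "summable (\<lambda>k. c * exp (- 1) ^ k)" by (intro summable_mult summable_geometric) simp
    fix k :: nat assume k: "2 * d + 6 \<le> k"
    have R: "measure lborel (RR (2 * d + 3) k) = aa (2 * d + 3) (k - 1) / 2 ^ k"
      by (rule RR_measure) (use k in simp)
    have "u k \<le> c * exp (- real k)" unfolding u_def s_def R
      using term_bound[OF d(1) d(2) k c] by simp
    also have "\<dots> = c * exp (- 1) ^ k" using exp_of_nat_mult[of k "-1::real"] by simp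
    finally show "norm (u k) \<le> c * exp (- 1) ^ k" using u0 by simp
  qed
  have Pn: "\<And>k j. 0 \<le> Pkj s k j" by (rule Pkj_nonneg)
  have "(\<Sum>r. ennreal (q (Suc r)) * emeasure M {\<omega>\<in>space M. memoryless_tau (ff s) T X \<omega> = T (Suc r) \<omega>})
     \<le> (\<Sum>r. ennreal (q (Suc r)) * (\<Sum>k. \<Sum>j. ennreal (if Suc r \<le> j then Pkj s k j else 0)))"
    unfolding s_def by (intro suminf_le mult_left_mono Er_bound d) auto
  also have "\<dots> = (\<Sum>r. \<Sum>k. \<Sum>j. ennreal (if Suc r \<le> j then q (Suc r) * Pkj s k j else 0))"
  proof (intro suminf_cong)
    fix r
    have "ennreal (q (Suc r)) * (\<Sum>k. \<Sum>j. ennreal (if Suc r \<le> j then Pkj s k j else 0))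
        = (\<Sum>k. \<Sum>j. ennreal (q (Suc r)) * ennreal (if Suc r \<le> j then Pkj s k j else 0))"
      by simp
    also have "\<dots> = (\<Sum>k. \<Sum>j. ennreal (if Suc r \<le> j then q (Suc r) * Pkj s k j else 0))"
      using q0 Pn by (intro suminf_cong) (auto simp: ennreal_mult)
    finally show "ennreal (q (Suc r)) * (\<Sum>k. \<Sum>j. ennreal (if Suc r \<le> j then Pkj s k j else 0))
        = (\<Sum>k. \<Sum>j. ennreal (if Suc r \<le> j then q (Suc r) * Pkj s k j else 0))" .
  qed
  also have "\<dots> = (\<Sum>k. \<Sum>r. \<Sum>j. ennreal (if Suc r \<le> j then q (Suc r) * Pkj s k j else 0))"
    by (rule ennsum_swap)
  also have "\<dots> = (\<Sum>k. \<Sum>j. \<Sum>r. ennreal (if Suc r \<le> j then q (Suc r) * Pkj s k j else 0))"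
    by (intro suminf_cong ennsum_swap)
  also have "\<dots> \<le> (\<Sum>k. \<Sum>j. ennreal (real j * q j * Pkj s k j))"
    by (intro suminf_le inner_bound q0 qm Pn) auto
  also have "\<dots> \<le> (\<Sum>k. ennreal (u k))"
  proof (intro suminf_le)
    fix k
    have "(\<Sum>j. ennreal (real j * q j * Pkj s k j))
        = (\<Sum>j. ennreal (exp (- measure lborel (RR s k))) * ennreal (real j * q j * pois (measure lborel (CC s k)) j))"
    proof (intro suminf_cong)
      fix j
      have "0 \<le> real j * q j * pois (measure lborel (CC s k)) j"
      proof (cases "j = 0")
        case False then show ?thesis using q0 by (intro mult_nonneg_nonneg pois_nonneg) auto
      qed simp
      then show "ennreal (real j * q j * Pkj s k j)
        = ennreal (exp (- measure lborel (RR s k))) * ennreal (real j * q j * pois (measure lborel (CC s k)) j)"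
        by (simp add: Pkj_def ennreal_mult[symmetric] mult_ac)
    qed
    also have "\<dots> = ennreal (exp (- measure lborel (RR s k))) * (\<Sum>j. ennreal (real j * q j * pois (measure lborel (CC s k)) j))"
      by simp
    also have "\<dots> \<le> ennreal (exp (- measure lborel (RR s k))) *
        ennreal (c * 4 ^ (k + 1) * exp ((4 ^ (k + 1)) powr (\<beta> / (1 - \<beta>))) * exp (4 * aa s k / 4 ^ (k + 1)))"
      using CC_adm(2)[of s k] by (intro mult_left_mono poisson_moment[OF qb c b]) auto
    also have "\<dots> = ennreal (u k)" unfolding u_def using c by (simp add: ennreal_mult[symmetric])
    finally show "(\<Sum>j. ennreal (real j * q j * Pkj s k j)) \<le> ennreal (u k)" .
  qed auto
  also have "\<dots> = ennreal (suminf u)" using us u0 by (intro suminf_ennreal2) auto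
  also have "\<dots> < \<top>" by simp
  finally show ?thesis by (simp only: s_def)
qed

lemma risk_finite: fixes q :: "nat \<Rightarrow> real"
  assumes q0: "\<forall>r\<ge>1. 0 \<le> q r" and qm: "mono_on {1..} q" and c: "0 < c"
    and b: "0 < \<beta>" "\<beta> < 1" and qb: "\<forall>r\<ge>1. q r < c * exp (real r powr \<beta>)"
    and d: "1 \<le> d" "\<beta> / (1 - \<beta>) \<le> real d"
  shows "risk M T X q (memoryless_tau (ff (2 * d + 3)) T X) < \<top>"
  unfolding risk_def using sum_bound[OF assms] tau1_null[OF d(1)] by simp

end

theorem mainTheorem2:
  fixes M :: "'a measure" and T X :: "nat \<Rightarrow> 'a \<Rightarrow> real"
    and q :: "nat \<Rightarrow> real" and c \<beta> :: real
  assumes "poisson_pp M T X"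
    and "\<forall>r\<ge>1. 0 \<le> q r"
    and "mono_on {1..} q"
    and "ennreal (q 1) < q_infty q"
    and "c > 0" and "0 < \<beta>" and "\<beta> < 1"
    and "\<forall>r\<ge>1. q r < c * exp (real r powr \<beta>)"
  shows "V_memoryless M T X q < \<top>"
proof -
  interpret ppx M T X by standard (rule assms(1))
  define d where "d = max 1 (nat \<lceil>\<beta> / (1 - \<beta>)\<rceil>)"
  have d: "1 \<le> d" "\<beta> / (1 - \<beta>) \<le> real d" unfolding d_def by linarith+
  have "V_memoryless M T X q \<le> risk M T X q (memoryless_tau (ff (2 * d + 3)) T X)"
    unfolding V_memoryless_def by (rule INF_lower) (simp add: ff_mono)
  also have "\<dots> < \<top>" using risk_finite[OF assms(2,3,5,6,7,8) d] .
  finally show ?thesis .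
qed


end
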